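(* Let $A\neq 1$ and $B\neq 0$ be real constants and let $(x_n)_{n\ge0}$ be the solution of $$x_{n+10}=\frac{x_n}{A+B\,x_nx_{n+2}x_{n+4}x_{n+6}x_{n+8}},\qquad n\ge 0,$$ with initial conditions $x_0,\dots,x_9$. Suppose the initial conditions satisfy $x_ix_{i+2}x_{i+4}x_{i+6}x_{i+8}=\frac{1-A}{B}$ for $i=0,1$, and $x_i\neq x_{i+2}$, $x_i\neq x_{i+5}$ (for those indices $i$ with the terms among $x_0,\dots,x_9$). Then the solution is periodic with period $10$. *)

theory Defs
  imports Complex_Main
begin

end

theory Submission
  imports Defs
begin

theorem theorem2:
  fixes A B :: real and x :: "nat \<Rightarrow> real"
  assumes "A \<noteq> 1" and "B \<noteq> 0"
    and rec: "\<And>n. x (n + 10) = x n / (A + B * x n * x (n + 2) * x (n + 4) * x (n + 6) * x (n + 8))"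
    and init: "\<And>i. i \<le> 1 \<Longrightarrow> x i * x (i + 2) * x (i + 4) * x (i + 6) * x (i + 8) = (1 - A) / B"
    and d2: "\<And>i. i \<le> 7 \<Longrightarrow> x i \<noteq> x (i + 2)"
    and d5: "\<And>i. i \<le> 4 \<Longrightarrow> x i \<noteq> x (i + 5)"
  shows "(\<forall>n. x (n + 10) = x n) \<and> (\<forall>p. 0 < p \<and> p < 10 \<longrightarrow> \<not> (\<forall>n. x (n + p) = x n))"
proof -
  define P where "P n = (x n * x (n + 2) * x (n + 4) * x (n + 6) * x (n + 8) = (1 - A) / B)" for n
  have step: "x (n + 10) = x n" if "P n" for n
  proof -
    have "A + B * x n * x (n + 2) * x (n + 4) * x (n + 6) * x (n + 8)
        = A + B * (x n * x (n + 2) * x (n + 4) * x (n + 6) * x (n + 8))" by (simp add: algebra_simps)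
    also have "\<dots> = 1" using that assms(2) unfolding P_def by simp
    finally show ?thesis using rec[of n] by simp
  qed
  have allP: "P n" for n
  proof (induction n rule: less_induct)
    case (less n)
    show ?case
    proof (cases "n \<le> 1")
      case True then show ?thesis using init unfolding P_def by blast
    next
      case False
      then obtain m where m: "n = m + 2" by (metis add.commute le_add_diff_inverse not_less_eq_eq one_add_one plus_1_eq_Suc)
      have "P m" using less m by simp
      hence e: "x (m + 10) = x m" by (rule step)
      have "x (m + 2) * x (m + 4) * x (m + 6) * x (m + 8) * x (m + 10) = (1 - A) / B"
        using \<open>P m\<close> e unfolding P_def by (simp add: algebra_simps)
      then show ?thesis unfolding P_def m by (simp add: algebra_simps numeral_eq_Suc)
    qed
  qed
  have per: "\<forall>n. x (n + 10) = x n" using step allP by blast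
  have per10: "x (n + 10 * k) = x n" for n k
    by (induction k) (auto, metis per add.assoc add.commute)
  have nop: "\<not> (\<forall>n. x (n + p) = x n)" if "0 < p" "p < 10" for p
  proof
    assume h: "\<forall>n. x (n + p) = x n"
    have hk: "x (n + p * k) = x n" for n k
      by (induction k) (auto, metis h add.assoc add.commute)
    have "p = 5 \<or> p \<in> {1,2,3,4,6,7,8,9}" using that by auto
    then show False
    proof
      assume "p = 5" then show False proof - have "x (0 + 5) = x 0" using h \<open>p = 5\<close> by blast then show False using d5[of 0] by simp qed
    next
      assume "p \<in> {1,2,3,4,6,7,8,9}"
      then have "\<exists>k m. p * k = 2 + 10 * m"
      proof (elim insertE emptyE)
        assume "p = 1" then show ?thesis by (intro exI[of _ 2] exI[of _ 0]) simp
      next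
        assume "p = 2" then show ?thesis by (intro exI[of _ 1] exI[of _ 0]) simp
      next
        assume "p = 3" then show ?thesis by (intro exI[of _ 4] exI[of _ 1]) simp
      next
        assume "p = 4" then show ?thesis by (intro exI[of _ 3] exI[of _ 1]) simp
      next
        assume "p = 6" then show ?thesis by (intro exI[of _ 2] exI[of _ 1]) simp
      next
        assume "p = 7" then show ?thesis by (intro exI[of _ 6] exI[of _ 4]) simp
      next
        assume "p = 8" then show ?thesis by (intro exI[of _ 4] exI[of _ 3]) simp
      next
        assume "p = 9" then show ?thesis by (intro exI[of _ 8] exI[of _ 7]) simp
      qed
      then obtain k m where km: "p * k = 2 + 10 * m" by blast
      have "x 0 = x (0 + p * k)" using hk[of 0 k] by presburger
      also have "\<dots> = x (2 + 10 * m)" using km by simp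
      also have "\<dots> = x 2" using per10[of 2 m] by presburger
      finally have "x 0 = x 2" . moreover have "x 0 \<noteq> x 2" using d2[of 0] by (simp add: numeral_2_eq_2) ultimately show False by blast
    qed
  qed
  show ?thesis using per nop by blast
qed

end
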